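(* Let $p,q$ be integers with $0<p<q$. There exists a set $A\subseteq\mathbb{N}$ such that $$\sum_{n=0}^N R_A(n)=0.5\frac{p^2}{q^2}N^2+1.5\frac{p^2}{q^2}N+O\big(\sqrt{N}\log^{1/2}N\big)\quad (N\to\infty).$$
   Context: $\mathbb{N}$ denotes the set of non-negative integers. For $A\subseteq\mathbb{N}$, $R_A(n)$ denotes the number of ordered pairs $(a,a')$ with $a,a'\in A$ and $a+a'=n$. *)

theory Defs
  imports Complex_Main "HOL-Library.Landau_Symbols"
begin

definition R :: "nat set \<Rightarrow> nat \<Rightarrow> nat" where
  "R A n = card {(a, a'). a \<in> A \<and> a' \<in> A \<and> a + a' = n}"

end

theory Submission
  imports Defs "HOL-Probability.Hoeffding"
begin


lemma exp_lin_bound: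
  fixes y c :: real
  assumes "c > 0" "\<bar>y\<bar> \<le> c"
  shows "exp y \<le> cosh c + y / c * sinh c"
proof -
  define t where "t = (c + y) / (2*c)"
  have t01: "0 \<le> t" "t \<le> 1" using assms by (auto simp: t_def field_simps)
  have ye: "y = (1 - t) * (-c) + t * c" using assms by (simp add: t_def field_simps)
  have "exp ((1 - t) * (-c) + t * c) \<le> (1 - t) * exp (-c) + t * exp c"
    using convex_onD[OF exp_convex t01, of "-c" c] by simp
  also have "\<dots> = cosh c + y / c * sinh c"
    using assms by (simp add: t_def cosh_def sinh_def field_simps)
  finally show ?thesis using ye by simp
qed

lemma sum_exp_bound:
  fixes x :: "'a \<Rightarrow> real"
  assumes "finite S" "c > 0" "\<And>s. s \<in> S \<Longrightarrow> \<bar>x s\<bar> \<le> c" "(\<Sum>s\<in>S. x s) = 0"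
  shows "(\<Sum>s\<in>S. exp (x s)) \<le> card S * cosh c"
proof -
  have "(\<Sum>s\<in>S. exp (x s)) \<le> (\<Sum>s\<in>S. cosh c + x s / c * sinh c)"
    by (rule sum_mono) (use assms exp_lin_bound in auto)
  also have "\<dots> = card S * cosh c + (sinh c / c) * (\<Sum>s\<in>S. x s)"
    by (simp add: sum.distrib sum_distrib_left field_simps sum_divide_distrib)
  finally show ?thesis using assms by simp
qed

lemma cosh_le_exp_sq: "cosh (y::real) \<le> exp (y^2/2)"
proof -
  have key: "cosh y \<le> exp (y^2/2)" if "y \<ge> 0" for y :: real
  proof -
    have "-(2*y) * (1/2) + ln (1 + (1/2) * (exp (2*y) - 1)) \<le> (2*y)^2/8"
      using Hoeffdings_lemma_aux[of "2*y" "1/2"] that by simp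
    hence "ln ((1 + exp (2*y))/2) \<le> y + y^2/2"
      by (simp add: field_simps power2_eq_square)
    hence "(1 + exp (2*y))/2 \<le> exp (y + y^2/2)"
      by (metis add_pos_pos divide_pos_pos exp_gt_zero exp_le_cancel_iff exp_ln zero_less_one zero_less_numeral)
    hence "exp (-y) * ((1 + exp (2*y))/2) \<le> exp (-y) * exp (y + y^2/2)"
      by (intro mult_left_mono) auto
    moreover have "exp (-y) * ((1 + exp (2*y))/2) = cosh y"
      by (simp add: cosh_def field_simps flip: exp_add)
    moreover have "exp (-y) * exp (y + y^2/2) = exp (y^2/2)"
      by (simp flip: exp_add)
    ultimately show ?thesis by simp
  qed
  show ?thesis
  proof (cases "y \<ge> 0")
    case True then show ?thesis by (rule key)
  next
    case False then show ?thesis using key[of "-y"] by simp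
  qed
qed

lemma sum_cosh_bound:
  fixes x :: "'a \<Rightarrow> real"
  assumes "finite S" "B > 0" "l \<ge> 0" "\<And>s. s \<in> S \<Longrightarrow> \<bar>x s\<bar> \<le> B" "(\<Sum>s\<in>S. x s) = 0"
  shows "(\<Sum>s\<in>S. cosh (a + l * x s)) \<le> card S * cosh a * exp (l^2 * B^2 / 2)"
proof (cases "l = 0")
  case True then show ?thesis by simp
next
  case False
  hence lpos: "l > 0" using assms by simp
  have c1: "(\<Sum>s\<in>S. exp (l * x s)) \<le> card S * cosh (l*B)"
    by (rule sum_exp_bound) (use assms lpos in \<open>auto simp: abs_mult sum_distrib_left[symmetric]\<close>)
  have c2: "(\<Sum>s\<in>S. exp (- l * x s)) \<le> card S * cosh (l*B)"
    by (rule sum_exp_bound) (use assms lpos in \<open>auto simp: abs_mult sum_distrib_left[symmetric] sum_negf\<close>)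
  have ce: "cosh (a + l * x s) = (exp a * exp (l * x s) + exp (-a) * exp (- l * x s))/2" for s
    by (simp add: cosh_def flip: exp_add)
  have "(\<Sum>s\<in>S. cosh (a + l * x s)) = (exp a * (\<Sum>s\<in>S. exp (l * x s)) + exp (-a) * (\<Sum>s\<in>S. exp (- l * x s)))/2"
    unfolding ce by (simp add: sum_distrib_left sum.distrib flip: sum_divide_distrib)
  also have "\<dots> \<le> (exp a * (card S * cosh (l*B)) + exp (-a) * (card S * cosh (l*B)))/2"
    by (intro divide_right_mono add_mono mult_left_mono c1 c2) auto
  also have "\<dots> = card S * cosh a * cosh (l*B)"
    by (simp add: cosh_def field_simps)
  also have "\<dots> \<le> card S * cosh a * exp (l^2*B^2/2)"
    using cosh_le_exp_sq[of "l*B"] by (intro mult_left_mono) (auto simp: power_mult_distrib)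
  finally show ?thesis .
qed



definition pterm :: "((nat \<Rightarrow> nat) \<Rightarrow> nat \<Rightarrow> nat \<Rightarrow> real) \<Rightarrow> real \<Rightarrow> (nat \<Rightarrow> nat) \<Rightarrow> (nat \<Rightarrow> real) \<Rightarrow> (nat \<Rightarrow> real)
   \<Rightarrow> (nat \<Rightarrow> nat) \<Rightarrow> nat \<Rightarrow> nat \<Rightarrow> real" where
  "pterm X B T lam w \<sigma> t i = w i * exp (-(lam i^2 * B^2/2) * min t (T i)) * cosh (lam i * (\<Sum>u<t. X \<sigma> u i))"

lemma potential:
  fixes X :: "(nat \<Rightarrow> nat) \<Rightarrow> nat \<Rightarrow> nat \<Rightarrow> real" and q :: nat and B :: real
    and T :: "nat \<Rightarrow> nat" and lam w :: "nat \<Rightarrow> real"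
  assumes q: "q > 0" and B: "B > 0"
    and loc: "\<And>\<sigma> \<sigma>' u i. (\<And>v. v \<le> u \<Longrightarrow> \<sigma> v = \<sigma>' v) \<Longrightarrow> X \<sigma> u i = X \<sigma>' u i"
    and mean: "\<And>\<sigma> u i. (\<Sum>s<q. X (\<sigma>(u:=s)) u i) = 0"
    and bnd: "\<And>\<sigma> u i. \<bar>X \<sigma> u i\<bar> \<le> B"
    and van: "\<And>\<sigma> u i. T i \<le> u \<Longrightarrow> X \<sigma> u i = 0"
    and lam: "\<And>i. 0 \<le> lam i \<and> lam i \<le> 1"
    and wpos: "\<And>i. 0 < w i" and wsum: "summable w"
  shows "\<exists>\<sigma>. \<forall>i. w i * exp (-(lam i^2 * B^2/2) * T i) * cosh (lam i * (\<Sum>u<T i. X \<sigma> u i)) \<le> suminf w"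
proof -
  let ?P = "pterm X B T lam w"
  define \<Phi> where "\<Phi> \<sigma> t = suminf (?P \<sigma> t)" for \<sigma> t
  have Pnn: "0 \<le> ?P \<sigma> t i" for \<sigma> t i
    unfolding pterm_def using wpos[of i] by (intro mult_nonneg_nonneg) (auto intro: less_imp_le)
  have Pbound: "?P \<sigma> t i \<le> w i * cosh (t * B)" for \<sigma> t i
  proof -
    have a: "(\<Sum>u<t. \<bar>X \<sigma> u i\<bar>) \<le> (\<Sum>u<t. B)" by (rule sum_mono) (rule bnd)
    have b: "\<bar>(\<Sum>u<t. X \<sigma> u i)\<bar> \<le> (\<Sum>u<t. \<bar>X \<sigma> u i\<bar>)" by (rule sum_abs)
    have "\<bar>(\<Sum>u<t. X \<sigma> u i)\<bar> \<le> (\<Sum>u<t. B)" using a b by linarith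
    hence s: "\<bar>(\<Sum>u<t. X \<sigma> u i)\<bar> \<le> t * B" by simp
    have "\<bar>lam i * (\<Sum>u<t. X \<sigma> u i)\<bar> \<le> t * B"
      using s lam[of i] by (simp add: abs_mult) (metis abs_ge_zero mult_left_le_one_le order_trans)
    hence "cosh \<bar>lam i * (\<Sum>u<t. X \<sigma> u i)\<bar> \<le> cosh (t * B)"
      using cosh_real_nonneg_le_iff[of "\<bar>lam i * (\<Sum>u<t. X \<sigma> u i)\<bar>" "t*B"] by simp
    hence c: "cosh (lam i * (\<Sum>u<t. X \<sigma> u i)) \<le> cosh (t * B)" by simp
    have e: "exp (-(lam i^2 * B^2/2) * min t (T i)) \<le> 1" by simp
    have "?P \<sigma> t i \<le> w i * 1 * cosh (t*B)"
      unfolding pterm_def using wpos[of i] c e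
      by (intro mult_mono) (auto intro: less_imp_le)
    thus ?thesis by simp
  qed
  have summ: "summable (?P \<sigma> t)" for \<sigma> t
    by (rule summable_comparison_test[of _ "\<lambda>i. w i * cosh (t*B)"])
       (use Pnn Pbound wsum summable_mult2 in auto)
  have step: "(\<Sum>s<q. ?P (\<sigma>(t:=s)) (Suc t) i) \<le> q * ?P \<sigma> t i" for \<sigma> t i
  proof -
    define Z where "Z = (\<Sum>u<t. X \<sigma> u i)"
    define x where "x s = X (\<sigma>(t:=s)) t i" for s
    have sumeq: "(\<Sum>u<Suc t. X (\<sigma>(t:=s)) u i) = Z + x s" for s
    proof -
      have "(\<Sum>u<t. X (\<sigma>(t:=s)) u i) = Z"
        unfolding Z_def by (intro sum.cong refl loc) auto
      thus ?thesis by (simp add: x_def)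
    qed
    show ?thesis
    proof (cases "T i \<le> t")
      case True
      hence "x s = 0" for s using van x_def by simp
      moreover have "min (Suc t) (T i) = min t (T i)" using True by simp
      ultimately show ?thesis unfolding pterm_def using sumeq by (simp add: Z_def)
    next
      case False
      hence m: "min (Suc t) (T i) = Suc t" "min t (T i) = t" by auto
      have cs: "(\<Sum>s<q. cosh (lam i * Z + lam i * x s)) \<le> card {..<q} * cosh (lam i * Z) * exp (lam i^2 * B^2/2)"
        by (rule sum_cosh_bound) (use B lam bnd mean x_def in auto)
      define c where "c = lam i^2 * B^2/2"
      have ee: "exp (-c * real (Suc t)) = exp (-c * t) * exp (-c)"
        by (simp add: algebra_simps flip: exp_add)
      have pe: "?P (\<sigma>(t:=s)) (Suc t) i = (w i * exp (-c * t) * exp (-c)) * cosh (lam i * Z + lam i * x s)" for s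
        unfolding pterm_def m sumeq c_def[symmetric] ee by (simp add: distrib_left)
      have "(\<Sum>s<q. ?P (\<sigma>(t:=s)) (Suc t) i)
          = w i * exp (-(lam i^2 * B^2/2) * t) * exp (-(lam i^2 * B^2/2)) * (\<Sum>s<q. cosh (lam i * Z + lam i * x s))"
        unfolding pe by (simp add: sum_distrib_left c_def)
      also have "\<dots> \<le> w i * exp (-(lam i^2 * B^2/2) * t) * exp (-(lam i^2 * B^2/2)) * (card {..<q} * cosh (lam i * Z) * exp (lam i^2 * B^2/2))"
        using wpos[of i] by (intro mult_left_mono cs) (auto intro: less_imp_le)
      also have "\<dots> = q * ?P \<sigma> t i"
        unfolding pterm_def m Z_def by (simp add: algebra_simps flip: exp_add)
      finally show ?thesis .
    qed
  qed
  have stepPhi: "(\<Sum>s<q. \<Phi> (\<sigma>(t:=s)) (Suc t)) \<le> q * \<Phi> \<sigma> t" for \<sigma> t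
  proof -
    have "(\<Sum>s<q. \<Phi> (\<sigma>(t:=s)) (Suc t)) = (\<Sum>i. \<Sum>s<q. ?P (\<sigma>(t:=s)) (Suc t) i)"
      unfolding \<Phi>_def by (rule suminf_sum[symmetric]) (use summ in auto)
    also have "\<dots> \<le> (\<Sum>i. q * ?P \<sigma> t i)"
        by (rule suminf_le) (auto intro!: step summable_sum summable_mult summ)
    also have "\<dots> = q * \<Phi> \<sigma> t"
      unfolding \<Phi>_def by (intro suminf_mult summ)
    finally show ?thesis .
  qed
  define ch where "ch \<sigma> t = (SOME s. s < q \<and> (\<forall>s'<q. \<Phi> (\<sigma>(t:=s)) (Suc t) \<le> \<Phi> (\<sigma>(t:=s')) (Suc t)))" for \<sigma> t
  have chex: "\<exists>s. s < q \<and> (\<forall>s'<q. \<Phi> (\<sigma>(t:=s)) (Suc t) \<le> \<Phi> (\<sigma>(t:=s')) (Suc t))" for \<sigma> t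
  proof -
    let ?f = "\<lambda>s. \<Phi> (\<sigma>(t:=s)) (Suc t)"
    have "Min (?f ` {..<q}) \<in> ?f ` {..<q}" by (rule Min_in) (use q in auto)
    then obtain s where s: "s < q" "?f s = Min (?f ` {..<q})" by auto
    have "\<forall>s'<q. ?f s \<le> ?f s'" unfolding s(2) by (auto intro: Min_le)
    hence "s < q \<and> (\<forall>s'<q. ?f s \<le> ?f s')" using s by auto
    thus ?thesis by auto
  qed
  have chok: "\<Phi> (\<sigma>(t:=ch \<sigma> t)) (Suc t) \<le> \<Phi> \<sigma> t" for \<sigma> t
  proof -
    have c: "ch \<sigma> t < q \<and> (\<forall>s'<q. \<Phi> (\<sigma>(t:=ch \<sigma> t)) (Suc t) \<le> \<Phi> (\<sigma>(t:=s')) (Suc t))"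
      unfolding ch_def by (rule someI_ex[OF chex])
    have "q * \<Phi> (\<sigma>(t:=ch \<sigma> t)) (Suc t) = (\<Sum>s<q. \<Phi> (\<sigma>(t:=ch \<sigma> t)) (Suc t))" by simp
    also have "\<dots> \<le> (\<Sum>s<q. \<Phi> (\<sigma>(t:=s)) (Suc t))"
      by (intro sum_mono) (use c in auto)
    also have "\<dots> \<le> q * \<Phi> \<sigma> t" by (rule stepPhi)
    finally show ?thesis using q by simp
  qed
  define sq where "sq = rec_nat (\<lambda>_. 0) (\<lambda>t \<sigma>. \<sigma>(t := ch \<sigma> t))"
  have sq0: "sq 0 = (\<lambda>_. 0)" and sqS: "sq (Suc t) = (sq t)(t := ch (sq t) t)" for t
    by (simp_all add: sq_def)
  have Phi_sq: "\<Phi> (sq t) t \<le> suminf w" for t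
  proof (induction t)
    case 0
    have "\<Phi> (sq 0) 0 = suminf w" unfolding \<Phi>_def pterm_def by simp
    thus ?case by simp
  next
    case (Suc t)
    then show ?case using chok[of "sq t" t] unfolding sqS by linarith
  qed
  define \<sigma>s where "\<sigma>s u = sq (Suc u) u" for u
  have agree: "u < t \<Longrightarrow> sq t u = \<sigma>s u" for t u
  proof (induction t)
    case 0 then show ?case by simp
  next
    case (Suc t)
    then show ?case by (cases "u = t") (auto simp: sqS \<sigma>s_def)
  qed
  show ?thesis
  proof (intro exI allI)
    fix i
    have "(\<Sum>u<T i. X \<sigma>s u i) = (\<Sum>u<T i. X (sq (T i)) u i)"
      by (intro sum.cong refl loc) (use agree in auto)
    hence "w i * exp (-(lam i^2 * B^2/2) * T i) * cosh (lam i * (\<Sum>u<T i. X \<sigma>s u i)) = ?P (sq (T i)) (T i) i"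
      unfolding pterm_def by simp
    also have "\<dots> \<le> \<Phi> (sq (T i)) (T i)"
      unfolding \<Phi>_def using sum_le_suminf[OF summ, of "{i}"] Pnn by simp
    also have "\<dots> \<le> suminf w" by (rule Phi_sq)
    finally show "w i * exp (-(lam i^2 * B^2/2) * T i) * cosh (lam i * (\<Sum>u<T i. X \<sigma>s u i)) \<le> suminf w" .
  qed
qed



definition ind :: "nat set \<Rightarrow> nat \<Rightarrow> real" where "ind A a = (if a \<in> A then 1 else 0)"

lemma R_sum: "real (R A n) = (\<Sum>a\<le>n. ind A a * ind A (n - a))"
proof -
  have eq: "{(a, a'). a \<in> A \<and> a' \<in> A \<and> a + a' = n} = (\<lambda>a. (a, n - a)) ` {a\<in>{..n}. a \<in> A \<and> n - a \<in> A}"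
    by (auto simp: image_def)
  have inj: "inj_on (\<lambda>a. (a, n - a)) {a\<in>{..n}. a \<in> A \<and> n - a \<in> A}" by (auto intro: inj_onI)
  have "R A n = card {a\<in>{..n}. a \<in> A \<and> n - a \<in> A}"
    unfolding R_def eq by (rule card_image[OF inj])
  hence "real (R A n) = (\<Sum>a\<in>{a\<in>{..n}. a \<in> A \<and> n - a \<in> A}. 1)" by simp
  also have "\<dots> = (\<Sum>a\<le>n. if a \<in> A \<and> n - a \<in> A then 1 else 0)"
    by (rule sum.inter_filter) simp
  also have "\<dots> = (\<Sum>a\<le>n. ind A a * ind A (n - a))"
    by (intro sum.cong refl) (simp add: ind_def)
  finally show ?thesis .
qed

lemma tri_sum:
  fixes g :: "nat \<Rightarrow> nat \<Rightarrow> real"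
  assumes "N < K"
  shows "(\<Sum>n\<le>N. \<Sum>a\<le>n. g a (n - a)) = (\<Sum>a<K. \<Sum>b<K. if a + b \<le> N then g a b else 0)"
proof -
  have "(\<Sum>n\<le>N. \<Sum>a\<le>n. g a (n - a)) = (\<Sum>(a,b)\<in>{(i,j). i+j < Suc N}. g a b)"
    using sum.triangle_reindex[of "\<lambda>a b. g a b" "Suc N"] by (simp add: lessThan_Suc_atMost)
  also have "{(i,j). i+j < Suc N} = {x\<in>{..<K}\<times>{..<K}. fst x + snd x \<le> N}"
    using assms by auto
  also have "(\<Sum>(a,b)\<in>{x\<in>{..<K}\<times>{..<K}. fst x + snd x \<le> N}. g a b)
      = (\<Sum>x\<in>{..<K}\<times>{..<K}. if fst x + snd x \<le> N then g (fst x) (snd x) else 0)"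
    unfolding case_prod_beta by (rule sum.inter_filter) simp
  also have "\<dots> = (\<Sum>(a,b)\<in>{..<K}\<times>{..<K}. if a + b \<le> N then g a b else 0)"
    unfolding case_prod_beta by (rule refl)
  also have "\<dots> = (\<Sum>a<K. \<Sum>b<K. if a + b \<le> N then g a b else 0)"
    by (rule sum.cartesian_product[symmetric])
  finally show ?thesis .
qed

lemma lin_sum:
  fixes f :: "nat \<Rightarrow> real"
  assumes "N < K"
  shows "(\<Sum>a<K. \<Sum>b<K. if a + b \<le> N then f a else 0) = (\<Sum>a<K. f a * real (N + 1 - a))"
proof (intro sum.cong refl)
  fix a assume "a \<in> {..<K}"
  have "(\<Sum>b<K. if a + b \<le> N then f a else 0) = (\<Sum>b\<in>{b\<in>{..<K}. a + b \<le> N}. f a)"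
    by (rule sum.inter_filter[symmetric]) simp
  also have "{b\<in>{..<K}. a + b \<le> N} = {..<N + 1 - a}" using assms by auto
  finally show "(\<Sum>b<K. if a + b \<le> N then f a else 0) = f a * real (N + 1 - a)" by simp
qed

lemma weighted_sum:
  fixes f :: "nat \<Rightarrow> real"
  shows "(\<Sum>a<n. f a * real (n - a)) = (\<Sum>k\<le>n. \<Sum>b<k. f b)"
proof (induction n)
  case 0 then show ?case by simp
next
  case (Suc n)
  have "(\<Sum>a<Suc n. f a * real (Suc n - a)) = (\<Sum>a<n. f a * real (n - a)) + (\<Sum>a<Suc n. f a)"
  proof -
    have "(\<Sum>a<Suc n. f a * real (Suc n - a)) = (\<Sum>a<Suc n. f a * real (n - a) + f a)"
      by (intro sum.cong refl) (auto simp: Suc_diff_le of_nat_Suc algebra_simps)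
    also have "\<dots> = (\<Sum>a<n. f a * real (n - a)) + (\<Sum>a<Suc n. f a)"
      by (simp add: sum.distrib)
    finally show ?thesis .
  qed
  then show ?case using Suc by simp
qed

lemma gauss_sum: "(\<Sum>a<n. real (n - a)) = real n * (real n + 1) / 2"
proof -
  have "(\<Sum>a<n. real (n - a)) = (\<Sum>a<n. 1 * real (n - a))" by simp
  also have "\<dots> = (\<Sum>k\<le>n. \<Sum>b<k. (1::real))" by (rule weighted_sum)
  also have "\<dots> = (\<Sum>k\<le>n. real k)" by simp
  also have "\<dots> = real n * (real n + 1) / 2" by (induction n) (simp_all add: field_simps)
  finally show ?thesis .
qed

lemma quad_sum:
  fixes f :: "nat \<Rightarrow> real"
  shows "(\<Sum>a<K. \<Sum>b<K. if a + b \<le> N then f a * f b else 0)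
    = (\<Sum>M<K. (if 2*M \<le> N then (f M)^2 else 0) + 2 * f M * (\<Sum>b<min M (N+1-M). f b))"
proof (induction K)
  case 0 then show ?case by simp
next
  case (Suc K)
  have row: "(\<Sum>b<K. if K + b \<le> N then f K * f b else 0) = f K * (\<Sum>b<min K (N+1-K). f b)"
  proof -
    have "(\<Sum>b<K. if K + b \<le> N then f K * f b else 0) = (\<Sum>b\<in>{b\<in>{..<K}. K + b \<le> N}. f K * f b)"
      by (rule sum.inter_filter[symmetric]) simp
    also have "{b\<in>{..<K}. K + b \<le> N} = {..<min K (N+1-K)}" by auto
    finally show ?thesis by (simp add: sum_distrib_left)
  qed
  have col: "(\<Sum>a<K. if a + K \<le> N then f a * f K else 0) = f K * (\<Sum>b<min K (N+1-K). f b)"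
  proof -
    have "(\<Sum>a<K. if a + K \<le> N then f a * f K else 0) = (\<Sum>b<K. if K + b \<le> N then f K * f b else 0)"
      by (rule sum.cong[OF refl]) (simp only: add.commute mult.commute)
    thus ?thesis using row by simp
  qed
  have "(\<Sum>a<Suc K. \<Sum>b<Suc K. if a + b \<le> N then f a * f b else 0)
      = (\<Sum>a<K. \<Sum>b<K. if a + b \<le> N then f a * f b else 0)
        + (\<Sum>a<K. if a + K \<le> N then f a * f K else 0)
        + (\<Sum>b<K. if K + b \<le> N then f K * f b else 0)
        + (if K + K \<le> N then f K * f K else 0)"
    by (simp add: sum.distrib algebra_simps)
  also have "\<dots> = (\<Sum>M<K. (if 2*M \<le> N then (f M)^2 else 0) + 2 * f M * (\<Sum>b<min M (N+1-M). f b))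
      + ((if 2*K \<le> N then (f K)^2 else 0) + 2 * f K * (\<Sum>b<min K (N+1-K). f b))"
  proof -
    have e: "(if K + K \<le> N then f K * f K else 0) = (if 2*K \<le> N then (f K)^2 else 0)"
      by (simp add: power2_eq_square)
    show ?thesis unfolding row col Suc.IH e by linarith
  qed
  also have "\<dots> = (\<Sum>M<Suc K. (if 2*M \<le> N then (f M)^2 else 0) + 2 * f M * (\<Sum>b<min M (N+1-M). f b))"
    by simp
  finally show ?case .
qed



lemma sum_trunc:
  fixes g :: "nat \<Rightarrow> real"
  assumes "n \<le> K" "\<And>a. n \<le> a \<Longrightarrow> g a = 0"
  shows "(\<Sum>a<K. g a) = (\<Sum>a<n. g a)"
  by (rule sum.mono_neutral_right) (use assms in auto)

lemma rot_inj_aux: "(x::nat) \<le> y \<Longrightarrow> y < q \<Longrightarrow> (x + s) mod q = (y + s) mod q \<Longrightarrow> x = y"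
proof -
  assume a: "x \<le> y" "y < q" "(x + s) mod q = (y + s) mod q"
  hence "q dvd (y + s) - (x + s)" using mod_eq_dvd_iff_nat[of "x+s" "y+s" q] by simp
  hence "q dvd y - x" by simp
  moreover have "y - x < q" using a by simp
  ultimately have "y - x = 0" using dvd_imp_le by (metis neq0_conv not_le)
  thus ?thesis using a by simp
qed

lemma sum_rot:
  fixes f :: "nat \<Rightarrow> real" and q s :: nat
  assumes q: "q > 0"
  shows "(\<Sum>j<q. f ((j + s) mod q)) = (\<Sum>j<q. f j)"
proof -
  let ?g = "\<lambda>j. (j + s) mod q"
  have inj: "inj_on ?g {..<q}"
  proof (rule inj_onI)
    fix x y assume xy: "x \<in> {..<q}" "y \<in> {..<q}" "(x + s) mod q = (y + s) mod q"
    thus "x = y" using rot_inj_aux[of x y q s] rot_inj_aux[of y x q s] by (cases "x \<le> y") auto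
  qed
  have img: "?g ` {..<q} = {..<q}"
    by (rule endo_inj_surj) (use inj q in auto)
  have "(\<Sum>j<q. f j) = (\<Sum>j\<in>?g ` {..<q}. f j)" using img by simp
  also have "\<dots> = (\<Sum>j<q. f ((j + s) mod q))" by (rule sum.reindex[OF inj, unfolded comp_def])
  finally show ?thesis by simp
qed

lemma count_rot:
  fixes p q s :: nat
  assumes "p \<le> q" "q > 0"
  shows "(\<Sum>j<q. (if (j + s) mod q < p then 1 else 0 :: real)) = p"
proof -
  have "(\<Sum>j<q. (if (j + s) mod q < p then 1 else 0 :: real)) = (\<Sum>j<q. (if j < p then 1 else 0 :: real))"
    using sum_rot[OF assms(2), of "\<lambda>j. if j < p then 1 else 0" s] by simp
  also have "\<dots> = card {j. j < q \<and> j < p}" by (simp add: sum.If_cases Int_def)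
  also have "{j. j < q \<and> j < p} = {..<p}" using assms by auto
  finally show ?thesis by simp
qed

context
  fixes p q :: nat
  assumes pq: "0 < p" "p < q"
begin

definition inA :: "(nat \<Rightarrow> nat) \<Rightarrow> nat \<Rightarrow> bool" where
  "inA \<sigma> m \<longleftrightarrow> (m mod q + \<sigma> (m div q)) mod q < p"
definition al :: real where "al = real p / real q"
definition hh :: "(nat \<Rightarrow> nat) \<Rightarrow> nat \<Rightarrow> real" where
  "hh \<sigma> m = (if inA \<sigma> m then 1 else 0) - al"
definition EE :: "(nat \<Rightarrow> nat) \<Rightarrow> nat \<Rightarrow> real" where
  "EE \<sigma> k = (\<Sum>b<k. hh \<sigma> b)"

lemma q2: "q \<ge> 2" using pq by simp
lemma qpos: "q > 0" using pq by simp
lemma al_pos: "0 < al" and al_lt1: "al < 1" and al_q: "al * q = p"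
  using pq by (auto simp: al_def field_simps)

lemma habs: "\<bar>hh \<sigma> m\<bar> \<le> 1"
  using al_pos al_lt1 by (auto simp: hh_def)

lemma EE_split: "a \<le> b \<Longrightarrow> EE \<sigma> b = EE \<sigma> a + (\<Sum>k\<in>{a..<b}. hh \<sigma> k)"
  unfolding EE_def by (metis atLeast0LessThan sum.atLeastLessThan_concat zero_le)

lemma blk_div: "k \<in> {u*q..<u*q+q} \<Longrightarrow> k div q = u"
  using qpos by (auto intro!: div_nat_eqI simp: algebra_simps)

lemma blk_mod: "k \<in> {u*q..<u*q+q} \<Longrightarrow> k mod q = k - u*q"
  using blk_div[of k u] by (metis minus_div_mult_eq_mod mult.commute)

lemma blk_sum: "(\<Sum>k\<in>{u*q..<u*q+q}. hh \<sigma> k) = 0"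
proof -
  have "(\<Sum>k\<in>{u*q..<u*q+q}. hh \<sigma> k) = (\<Sum>j\<in>{0..<q}. hh \<sigma> (u*q + j))"
    by (simp add: sum.atLeastLessThan_shift_0[of _ "u*q"] comp_def)
  also have "\<dots> = (\<Sum>j<q. (if (j + \<sigma> u) mod q < p then 1 else 0) - al)"
  proof (rule sum.cong)
    fix j assume j: "j \<in> {..<q}"
    hence "u*q + j \<in> {u*q..<u*q+q}" by simp
    from blk_div[OF this] blk_mod[OF this]
    show "hh \<sigma> (u*q + j) = (if (j + \<sigma> u) mod q < p then 1 else 0) - al"
      by (simp add: hh_def inA_def)
  qed (simp add: atLeast0LessThan)
  also have "\<dots> = p - q * al"
    using count_rot[of p q "\<sigma> u"] pq by (simp add: sum_subtractf)
  also have "\<dots> = 0" using al_q by (simp add: mult.commute)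
  finally show ?thesis .
qed

lemma EE_blk0: "EE \<sigma> (u*q) = 0"
proof (induction u)
  case 0 then show ?case by (simp add: EE_def)
next
  case (Suc u)
  have "EE \<sigma> (Suc u * q) = EE \<sigma> (u*q) + (\<Sum>k\<in>{u*q..<u*q+q}. hh \<sigma> k)"
    using EE_split[of "u*q" "Suc u * q" \<sigma>] by (simp add: add.commute)
  then show ?case using Suc blk_sum by simp
qed

lemma EE_abs: "\<bar>EE \<sigma> k\<bar> \<le> q"
proof -
  define u where "u = k div q"
  have le: "u*q \<le> k" "k < u*q + q" using qpos
    by (auto simp: u_def) (metis add.commute div_mult_mod_eq mod_less_divisor nat_add_left_cancel_less)
  have "EE \<sigma> k = (\<Sum>b\<in>{u*q..<k}. hh \<sigma> b)"
    using EE_split[OF le(1), of \<sigma>] EE_blk0 by simp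
  also have "\<bar>\<dots>\<bar> \<le> (\<Sum>b\<in>{u*q..<k}. \<bar>hh \<sigma> b\<bar>)" by (rule sum_abs)
  also have "\<dots> \<le> (\<Sum>b\<in>{u*q..<k}. 1)" by (rule sum_mono) (rule habs)
  also have "\<dots> = real (k - u*q)" by simp
  also have "\<dots> \<le> real q" using le by (simp only: of_nat_le_iff)
  finally show ?thesis by simp
qed

lemma hh_loc: "\<sigma> (m div q) = \<sigma>' (m div q) \<Longrightarrow> hh \<sigma> m = hh \<sigma>' m"
  by (simp add: hh_def inA_def)

lemma EE_loc: "(\<And>b. b < k \<Longrightarrow> \<sigma> (b div q) = \<sigma>' (b div q)) \<Longrightarrow> EE \<sigma> k = EE \<sigma>' k"
  unfolding EE_def by (intro sum.cong refl hh_loc) auto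

lemma mean_hh: "m \<in> {u*q..<u*q+q} \<Longrightarrow> (\<Sum>s<q. hh (\<sigma>(u:=s)) m) = 0"
proof -
  assume m: "m \<in> {u*q..<u*q+q}"
  have "(\<Sum>s<q. hh (\<sigma>(u:=s)) m) = (\<Sum>s<q. (if (s + m mod q) mod q < p then 1 else 0) - al)"
    using blk_div[OF m] by (intro sum.cong refl) (simp add: hh_def inA_def add.commute)
  also have "\<dots> = p - q * al"
    using count_rot[of p q "m mod q"] pq by (simp add: sum_subtractf)
  also have "\<dots> = 0" using al_q by (simp add: mult.commute)
  finally show ?thesis .
qed

definition XQ :: "(nat \<Rightarrow> nat) \<Rightarrow> nat \<Rightarrow> nat \<Rightarrow> real" where
  "XQ \<sigma> u N = (\<Sum>k\<in>{u*q..<u*q+q}. 2 * hh \<sigma> k * EE \<sigma> (min (u*q) (N+1-k)))"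
definition YL :: "(nat \<Rightarrow> nat) \<Rightarrow> nat \<Rightarrow> nat \<Rightarrow> real" where
  "YL \<sigma> u N = (\<Sum>k\<in>{u*q..<u*q+q}. if k \<le> N+1 then EE \<sigma> k else 0)"
definition RQ :: "(nat \<Rightarrow> nat) \<Rightarrow> nat \<Rightarrow> nat \<Rightarrow> real" where
  "RQ \<sigma> u N = (\<Sum>k\<in>{u*q..<u*q+q}. (if 2*k \<le> N then (hh \<sigma> k)^2 else 0)
      + 2 * hh \<sigma> k * (EE \<sigma> (min k (N+1-k)) - EE \<sigma> (min (u*q) (N+1-k))))"

lemma XQ_loc: "(\<And>v. v \<le> u \<Longrightarrow> \<sigma> v = \<sigma>' v) \<Longrightarrow> XQ \<sigma> u N = XQ \<sigma>' u N"
proof -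
  assume a: "\<And>v. v \<le> u \<Longrightarrow> \<sigma> v = \<sigma>' v"
  show ?thesis unfolding XQ_def
  proof (intro sum.cong refl arg_cong2[where f = "(*)"] arg_cong[where f = "(*) 2"])
    fix k assume k: "k \<in> {u*q..<u*q+q}"
    show "hh \<sigma> k = hh \<sigma>' k" using blk_div[OF k] a by (intro hh_loc) simp
    show "EE \<sigma> (min (u*q) (N+1-k)) = EE \<sigma>' (min (u*q) (N+1-k))"
    proof (rule EE_loc)
      fix b assume "b < min (u*q) (N+1-k)"
      hence "b div q < u" using qpos by (simp add: less_mult_imp_div_less)
      thus "\<sigma> (b div q) = \<sigma>' (b div q)" using a by simp
    qed
  qed
qed

lemma YL_loc: "(\<And>v. v \<le> u \<Longrightarrow> \<sigma> v = \<sigma>' v) \<Longrightarrow> YL \<sigma> u N = YL \<sigma>' u N"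
proof -
  assume a: "\<And>v. v \<le> u \<Longrightarrow> \<sigma> v = \<sigma>' v"
  show ?thesis unfolding YL_def
  proof (intro sum.cong refl if_cong)
    fix k assume k: "k \<in> {u*q..<u*q+q}"
    show "EE \<sigma> k = EE \<sigma>' k"
    proof (rule EE_loc)
      fix b assume "b < k"
      hence "b < (Suc u) * q" using k by simp
      hence "b div q < Suc u" by (rule less_mult_imp_div_less)
      hence "b div q \<le> u" by simp
      thus "\<sigma> (b div q) = \<sigma>' (b div q)" using a by simp
    qed
  qed
qed

lemma XQ_mean: "(\<Sum>s<q. XQ (\<sigma>(u:=s)) u N) = 0"
proof -
  have E: "EE (\<sigma>(u:=s)) (min (u*q) (N+1-k)) = EE \<sigma> (min (u*q) (N+1-k))" for s k
  proof (rule EE_loc)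
    fix b assume "b < min (u*q) (N+1-k)"
    hence "b div q < u" using qpos by (simp add: less_mult_imp_div_less)
    thus "(\<sigma>(u:=s)) (b div q) = \<sigma> (b div q)" by simp
  qed
  have "(\<Sum>s<q. XQ (\<sigma>(u:=s)) u N) = (\<Sum>k\<in>{u*q..<u*q+q}. 2 * EE \<sigma> (min (u*q) (N+1-k)) * (\<Sum>s<q. hh (\<sigma>(u:=s)) k))"
    unfolding XQ_def E by (subst sum.swap) (simp add: sum_distrib_left sum_distrib_right mult_ac)
  also have "\<dots> = 0" using mean_hh by simp
  finally show ?thesis .
qed

lemma YL_mean: "(\<Sum>s<q. YL (\<sigma>(u:=s)) u N) = 0"
proof -
  have E: "EE (\<sigma>(u:=s)) k = (\<Sum>b\<in>{u*q..<k}. hh (\<sigma>(u:=s)) b)" if "k \<in> {u*q..<u*q+q}" for s k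
    using EE_split[of "u*q" k "\<sigma>(u:=s)"] EE_blk0 that by simp
  have "(\<Sum>s<q. YL (\<sigma>(u:=s)) u N) = (\<Sum>k\<in>{u*q..<u*q+q}. if k \<le> N+1 then (\<Sum>b\<in>{u*q..<k}. (\<Sum>s<q. hh (\<sigma>(u:=s)) b)) else 0)"
    unfolding YL_def
    by (subst sum.swap) (intro sum.cong refl, auto simp: E intro: sum.swap)
  also have "\<dots> = 0" using mean_hh by (intro sum.neutral) auto
  finally show ?thesis .
qed

lemma XQ_bnd: "\<bar>XQ \<sigma> u N\<bar> \<le> 2 * q^2"
proof -
  have "\<bar>XQ \<sigma> u N\<bar> \<le> (\<Sum>k\<in>{u*q..<u*q+q}. \<bar>2 * hh \<sigma> k * EE \<sigma> (min (u*q) (N+1-k))\<bar>)"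
    unfolding XQ_def by (rule sum_abs)
  also have "\<dots> \<le> (\<Sum>k\<in>{u*q..<u*q+q}. 2 * real q)"
  proof (rule sum_mono)
    fix k
    have "\<bar>2 * hh \<sigma> k * EE \<sigma> (min (u*q) (N+1-k))\<bar> = 2 * \<bar>hh \<sigma> k\<bar> * \<bar>EE \<sigma> (min (u*q) (N+1-k))\<bar>"
      by (simp add: abs_mult)
    also have "\<dots> \<le> 2 * 1 * real q" using habs EE_abs by (intro mult_mono) auto
    finally show "\<bar>2 * hh \<sigma> k * EE \<sigma> (min (u*q) (N+1-k))\<bar> \<le> 2 * real q" by simp
  qed
  also have "\<dots> = 2 * q^2" by (simp add: power2_eq_square)
  finally show ?thesis .
qed

lemma YL_bnd: "\<bar>YL \<sigma> u N\<bar> \<le> 2 * q^2"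
proof -
  have "\<bar>YL \<sigma> u N\<bar> \<le> (\<Sum>k\<in>{u*q..<u*q+q}. \<bar>if k \<le> N+1 then EE \<sigma> k else 0\<bar>)"
    unfolding YL_def by (rule sum_abs)
  also have "\<dots> \<le> (\<Sum>k\<in>{u*q..<u*q+q}. 2 * real q)"
  proof (rule sum_mono)
    fix k
    have "\<bar>EE \<sigma> k\<bar> \<le> 2 * real q" using EE_abs[of \<sigma> k] by simp
    thus "\<bar>if k \<le> N+1 then EE \<sigma> k else 0\<bar> \<le> 2 * real q" by simp
  qed
  also have "\<dots> = 2 * q^2" by (simp add: power2_eq_square)
  finally show ?thesis .
qed

lemma XQ_van: "N + 1 \<le> u \<Longrightarrow> XQ \<sigma> u N = 0"
proof -
  assume u: "N + 1 \<le> u"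
  have "N + 1 \<le> u * q" using u q2 by (metis dual_order.trans le_square mult_le_mono one_le_numeral mult.right_neutral mult_le_mono2 order_trans)
  hence "N + 1 - k = 0" if "k \<in> {u*q..<u*q+q}" for k using that by simp
  thus ?thesis unfolding XQ_def by (simp add: EE_def)
qed

lemma YL_van: "N + 1 \<le> u \<Longrightarrow> YL \<sigma> u N = 0"
proof -
  assume u: "N + 1 \<le> u"
  have "u * 2 \<le> u * q" using q2 by simp
  hence "N + 1 < u * q" using u by linarith
  thus ?thesis unfolding YL_def by (intro sum.neutral) auto
qed

lemma EE_Suc: "EE \<sigma> (Suc k) = EE \<sigma> k + hh \<sigma> k"
  by (simp add: EE_def)

lemma RQ_zero: "u \<noteq> N div (2*q) \<Longrightarrow> RQ \<sigma> u N = 0"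
proof -
  assume u: "u \<noteq> N div (2*q)"
  have cases: "N < 2*u*q \<or> 2*u*q + 2*q \<le> N"
  proof (rule ccontr)
    assume "\<not> (N < 2*u*q \<or> 2*u*q + 2*q \<le> N)"
    hence "(2*q) * u \<le> N" "N < (2*q) * (Suc u)" by (auto simp: algebra_simps)
    hence "N div (2*q) = u" by (intro div_nat_eqI) auto
    thus False using u by simp
  qed
  show ?thesis
  proof (cases "N < 2*u*q")
    case True
    show ?thesis unfolding RQ_def
    proof (intro sum.neutral ballI)
      fix k assume k: "k \<in> {u*q..<u*q+q}"
      hence "\<not> 2*k \<le> N" "min k (N+1-k) = N+1-k" "min (u*q) (N+1-k) = N+1-k" using True by auto
      thus "(if 2*k \<le> N then (hh \<sigma> k)^2 else 0)
        + 2 * hh \<sigma> k * (EE \<sigma> (min k (N+1-k)) - EE \<sigma> (min (u*q) (N+1-k))) = 0" by simp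
    qed
  next
    case False
    hence big: "2*u*q + 2*q \<le> N" using cases by simp
    have "RQ \<sigma> u N = (\<Sum>k\<in>{u*q..<u*q+q}. (EE \<sigma> (Suc k))^2 - (EE \<sigma> k)^2)"
      unfolding RQ_def
    proof (intro sum.cong refl)
      fix k assume k: "k \<in> {u*q..<u*q+q}"
      hence "2*k \<le> N" "min k (N+1-k) = k" "min (u*q) (N+1-k) = u*q" using big by auto
      thus "(if 2*k \<le> N then (hh \<sigma> k)^2 else 0)
        + 2 * hh \<sigma> k * (EE \<sigma> (min k (N+1-k)) - EE \<sigma> (min (u*q) (N+1-k))) = (EE \<sigma> (Suc k))^2 - (EE \<sigma> k)^2"
        using EE_blk0[of \<sigma> u] by (simp add: EE_Suc power2_eq_square algebra_simps)
    qed
    also have "\<dots> = (EE \<sigma> (u*q+q))^2 - (EE \<sigma> (u*q))^2"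
      by (rule sum_Suc_diff') simp
    also have "\<dots> = 0" using EE_blk0[of \<sigma> u] EE_blk0[of \<sigma> "Suc u"] by (simp add: add.commute)
    finally show ?thesis .
  qed
qed

lemma RQ_term_bnd: "\<bar>(if c then (hh \<sigma> k)^2 else 0) + 2 * hh \<sigma> k * (EE \<sigma> a - EE \<sigma> b)\<bar> \<le> 5 * real q"
proof -
  have h1: "\<bar>hh \<sigma> k\<bar> \<le> 1" by (rule habs)
  have "\<bar>hh \<sigma> k\<bar>^2 \<le> 1" by (rule power_le_one[OF abs_ge_zero h1])
  hence h2: "(hh \<sigma> k)^2 \<le> 1" by (simp only: power2_abs)
  have h3: "\<bar>EE \<sigma> a - EE \<sigma> b\<bar> \<le> 2 * real q"
    using EE_abs[of \<sigma> a] EE_abs[of \<sigma> b] by linarith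
  have "\<bar>hh \<sigma> k\<bar> * \<bar>EE \<sigma> a - EE \<sigma> b\<bar> \<le> 1 * (2 * real q)"
    by (rule mult_mono[OF h1 h3]) auto
  hence t2: "\<bar>2 * hh \<sigma> k * (EE \<sigma> a - EE \<sigma> b)\<bar> \<le> 4 * real q"
    by (simp add: abs_mult)
  have t1: "\<bar>(if c then (hh \<sigma> k)^2 else 0)\<bar> \<le> 1" using h2 by simp
  have "(1::real) \<le> q" using qpos by simp
  thus ?thesis using t1 t2 abs_triangle_ineq[of "(if c then (hh \<sigma> k)^2 else 0)" "2 * hh \<sigma> k * (EE \<sigma> a - EE \<sigma> b)"]
    by linarith
qed

lemma RQ_bnd: "\<bar>RQ \<sigma> u N\<bar> \<le> 5 * q^2"
proof -
  have "\<bar>RQ \<sigma> u N\<bar> \<le> (\<Sum>k\<in>{u*q..<u*q+q}. 5 * real q)"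
    unfolding RQ_def by (rule order_trans[OF sum_abs sum_mono[OF RQ_term_bnd]])
  also have "\<dots> = 5 * q^2" by (simp add: power2_eq_square)
  finally show ?thesis .
qed

lemma RQ_sum_bnd: "\<bar>\<Sum>u<M. RQ \<sigma> u N\<bar> \<le> 5 * q^2"
proof -
  have "(\<Sum>u<M. RQ \<sigma> u N) = (if N div (2*q) \<in> {..<M} then RQ \<sigma> (N div (2*q)) N else 0)"
  proof -
    have "(\<Sum>u<M. RQ \<sigma> u N) = (\<Sum>u<M. if u = N div (2*q) then RQ \<sigma> u N else 0)"
      by (intro sum.cong refl) (auto simp: RQ_zero)
    also have "\<dots> = (if N div (2*q) \<in> {..<M} then RQ \<sigma> (N div (2*q)) N else 0)"
      by (rule sum.delta) simp
    finally show ?thesis .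
  qed
  thus ?thesis using RQ_bnd[of \<sigma> "N div (2*q)" N] by auto
qed

definition Aset :: "(nat \<Rightarrow> nat) \<Rightarrow> nat set" where "Aset \<sigma> = {m. inA \<sigma> m}"

lemma ind_al: "ind (Aset \<sigma>) a = al + hh \<sigma> a"
  by (simp add: ind_def Aset_def hh_def)

lemma lin_part: "(\<Sum>a<(N+1)*q. \<Sum>b<(N+1)*q. if a + b \<le> N then al * hh \<sigma> a else 0) = al * (\<Sum>u<N+1. YL \<sigma> u N)"
proof -
  let ?K = "(N+1)*q"
  have "(N+1)*2 \<le> ?K" using q2 by (rule mult_le_mono2)
  hence NK: "N + 1 < ?K" by simp
  have "(\<Sum>a<?K. \<Sum>b<?K. if a + b \<le> N then al * hh \<sigma> a else 0) = (\<Sum>a<?K. al * hh \<sigma> a * real (N + 1 - a))"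
    by (rule lin_sum) (use NK in simp)
  also have "\<dots> = (\<Sum>a<N+1. al * hh \<sigma> a * real (N + 1 - a))"
    by (rule sum_trunc) (use NK in auto)
  also have "\<dots> = al * (\<Sum>a<N+1. hh \<sigma> a * real (N + 1 - a))"
    by (simp only: sum_distrib_left mult.assoc)
  also have "(\<Sum>a<N+1. hh \<sigma> a * real (N + 1 - a)) = (\<Sum>k\<le>N+1. EE \<sigma> k)"
    unfolding EE_def by (rule weighted_sum)
  also have "\<dots> = (\<Sum>k<?K. if k \<le> N+1 then EE \<sigma> k else 0)"
  proof -
    have "(\<Sum>k<?K. if k \<le> N+1 then EE \<sigma> k else 0) = (\<Sum>k<N+2. if k \<le> N+1 then EE \<sigma> k else 0)"
      by (rule sum_trunc) (use NK in auto)
    also have "\<dots> = (\<Sum>k\<le>N+1. EE \<sigma> k)"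
      by (simp add: lessThan_Suc_atMost[symmetric] numeral_2_eq_2)
    finally show ?thesis by simp
  qed
  also have "\<dots> = (\<Sum>u<N+1. YL \<sigma> u N)"
    unfolding YL_def by (rule sum.nat_group[symmetric])
  finally show ?thesis .
qed

lemma main_id:
  "real (\<Sum>n\<le>N. R (Aset \<sigma>) n) = al^2 * ((real N + 1) * (real N + 2) / 2) + 2 * al * (\<Sum>u<N+1. YL \<sigma> u N)
     + (\<Sum>u<N+1. XQ \<sigma> u N) + (\<Sum>u<N+1. RQ \<sigma> u N)"
proof -
  let ?K = "(N+1)*q"
  let ?A = "Aset \<sigma>"
  have "(N+1)*2 \<le> ?K" using q2 by (rule mult_le_mono2)
  hence NK: "N < ?K" by simp
  have "real (\<Sum>n\<le>N. R ?A n) = (\<Sum>n\<le>N. \<Sum>a\<le>n. ind ?A a * ind ?A (n - a))"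
    by (simp add: R_sum)
  also have "\<dots> = (\<Sum>a<?K. \<Sum>b<?K. if a + b \<le> N then ind ?A a * ind ?A b else 0)"
    by (rule tri_sum[OF NK])
  also have "\<dots> = (\<Sum>a<?K. \<Sum>b<?K. if a + b \<le> N then al * al else 0)
      + (\<Sum>a<?K. \<Sum>b<?K. if a + b \<le> N then al * hh \<sigma> a else 0)
      + (\<Sum>a<?K. \<Sum>b<?K. if a + b \<le> N then al * hh \<sigma> b else 0)
      + (\<Sum>a<?K. \<Sum>b<?K. if a + b \<le> N then hh \<sigma> a * hh \<sigma> b else 0)"
  proof -
    have pt: "(if a + b \<le> N then ind ?A a * ind ?A b else 0) =
      (if a + b \<le> N then al * al else 0) + (if a + b \<le> N then al * hh \<sigma> a else 0)
      + (if a + b \<le> N then al * hh \<sigma> b else 0) + (if a + b \<le> N then hh \<sigma> a * hh \<sigma> b else 0)" for a b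
      by (simp add: ind_al algebra_simps)
    show ?thesis by (simp only: pt sum.distrib)
  qed
  also have "(\<Sum>a<?K. \<Sum>b<?K. if a + b \<le> N then al * al else 0) = al^2 * ((real N + 1) * (real N + 2) / 2)"
  proof -
    have "(\<Sum>a<?K. \<Sum>b<?K. if a + b \<le> N then al * al else 0) = (\<Sum>a<?K. al * al * real (N + 1 - a))"
      by (rule lin_sum[OF NK])
    also have "\<dots> = (\<Sum>a<N+1. al * al * real (N + 1 - a))"
      by (rule sum_trunc) (use NK in auto)
    also have "\<dots> = al * al * (\<Sum>a<N+1. real (N + 1 - a))" by (simp only: sum_distrib_left mult.assoc)
    also have "\<dots> = al^2 * ((real N + 1) * (real N + 2) / 2)"
      by (simp only: gauss_sum) (simp add: power2_eq_square algebra_simps)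
    finally show ?thesis .
  qed
  also have "(\<Sum>a<?K. \<Sum>b<?K. if a + b \<le> N then al * hh \<sigma> b else 0)
      = (\<Sum>a<?K. \<Sum>b<?K. if a + b \<le> N then al * hh \<sigma> a else 0)"
    by (subst sum.swap) (simp add: add.commute)
  also have "(\<Sum>a<?K. \<Sum>b<?K. if a + b \<le> N then al * hh \<sigma> a else 0) = al * (\<Sum>u<N+1. YL \<sigma> u N)"
    by (rule lin_part)
  also have "(\<Sum>a<?K. \<Sum>b<?K. if a + b \<le> N then hh \<sigma> a * hh \<sigma> b else 0)
      = (\<Sum>u<N+1. XQ \<sigma> u N) + (\<Sum>u<N+1. RQ \<sigma> u N)"
  proof -
    have "(\<Sum>a<?K. \<Sum>b<?K. if a + b \<le> N then hh \<sigma> a * hh \<sigma> b else 0)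
      = (\<Sum>M<?K. (if 2*M \<le> N then (hh \<sigma> M)^2 else 0) + 2 * hh \<sigma> M * EE \<sigma> (min M (N+1-M)))"
      by (simp only: quad_sum EE_def)
    also have "\<dots> = (\<Sum>u<N+1. \<Sum>M\<in>{u*q..<u*q+q}. (if 2*M \<le> N then (hh \<sigma> M)^2 else 0) + 2 * hh \<sigma> M * EE \<sigma> (min M (N+1-M)))"
      by (rule sum.nat_group[symmetric])
    also have "\<dots> = (\<Sum>u<N+1. XQ \<sigma> u N + RQ \<sigma> u N)"
    proof (rule sum.cong[OF refl])
      fix u
      show "(\<Sum>M\<in>{u*q..<u*q+q}. (if 2*M \<le> N then (hh \<sigma> M)^2 else 0) + 2 * hh \<sigma> M * EE \<sigma> (min M (N+1-M)))
          = XQ \<sigma> u N + RQ \<sigma> u N"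
        unfolding XQ_def RQ_def sum.distrib[symmetric] by (rule sum.cong[OF refl]) (simp add: algebra_simps)
    qed
    also have "\<dots> = (\<Sum>u<N+1. XQ \<sigma> u N) + (\<Sum>u<N+1. RQ \<sigma> u N)" by (rule sum.distrib)
    finally show ?thesis .
  qed
  finally show ?thesis by simp
qed

end



lemma pot_bound:
  fixes lam w W c Z :: real
  assumes "lam > 0" "w > 0" "w * exp (-c) * cosh (lam * Z) \<le> W"
  shows "lam * \<bar>Z\<bar> \<le> ln (2 * W / w) + c"
proof -
  have ch: "exp (lam * \<bar>Z\<bar>) \<le> 2 * cosh (lam * Z)"
  proof -
    have "exp (lam * \<bar>Z\<bar>) \<le> exp (lam * Z) + exp (- (lam * Z))"
      using assms(1) by (cases "Z \<ge> 0") (auto simp: abs_if add_increasing add_increasing2 less_imp_le)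
    thus ?thesis by (simp add: cosh_def)
  qed
  have "w * exp (-c) * exp (lam * \<bar>Z\<bar>) \<le> w * exp (-c) * (2 * cosh (lam * Z))"
    using assms(2) ch by (intro mult_left_mono) auto
  also have "\<dots> \<le> 2 * W" using assms(3) by simp
  finally have L: "w * exp (-c) * exp (lam * \<bar>Z\<bar>) \<le> 2 * W" .
  hence "exp (lam * \<bar>Z\<bar> - c) \<le> 2 * W / w"
    using assms(2) by (simp add: field_simps exp_diff exp_minus)
  moreover have "2 * W / w > 0"
  proof -
    have "0 < w * exp (-c) * exp (lam * \<bar>Z\<bar>)" using assms(2) by simp
    hence "0 < 2 * W" using L by linarith
    thus ?thesis using assms(2) by simp
  qed
  ultimately have "lam * \<bar>Z\<bar> - c \<le> ln (2 * W / w)" using ln_ge_iff by blast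
  thus ?thesis by simp
qed

lemma abs4: "\<bar>(a::real) + b + c + d\<bar> \<le> \<bar>a\<bar> + \<bar>b\<bar> + \<bar>c\<bar> + \<bar>d\<bar>"
  by arith

lemma summable_w: "summable (\<lambda>i::nat. 1 / (real i + 1)^2)"
proof -
  have "summable (\<lambda>n. inverse ((real (Suc n))^2))"
    using inverse_power_summable[of 2] by (subst summable_Suc_iff) simp
  thus ?thesis by (simp add: inverse_eq_divide add.commute)
qed

context
  fixes p q :: nat
  assumes pq: "0 < p" "p < q"
begin

lemma good_sigma:
  "\<exists>C \<sigma>. \<forall>N. \<bar>\<Sum>u<N+1. XQ p q \<sigma> u N\<bar> \<le> C * sqrt ((2*real N + 2) * ln (2*real N + 3))
       \<and> \<bar>\<Sum>u<N+1. YL p q \<sigma> u N\<bar> \<le> C * sqrt ((2*real N + 2) * ln (2*real N + 3))"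
proof -
  define X where "X \<sigma> u i = (if even i then XQ p q \<sigma> u (i div 2) else YL p q \<sigma> u (i div 2))" for \<sigma> u i
  define B :: real where "B = 2 * real q^2"
  define T where "T i = i div 2 + 1" for i :: nat
  define lam where "lam i = sqrt (ln (real i + 2) / (real i + 1))" for i :: nat
  define w where "w i = 1 / (real i + 1)^2" for i :: nat
  have qpos: "q > 0" using pq by simp
  have Bpos: "B > 0" using qpos by (simp add: B_def)
  have lnpos: "ln (real i + 2) > 0" for i :: nat by simp
  have lam01: "0 \<le> lam i \<and> lam i \<le> 1" for i
  proof -
    have "ln (real i + 2) \<le> real i + 1" using ln_le_minus_one[of "real i + 2"] by simp
    hence "ln (real i + 2) / (real i + 1) \<le> 1" by simp
    moreover have "0 \<le> ln (real i + 2) / (real i + 1)" using lnpos[of i] by simp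
    ultimately show ?thesis unfolding lam_def by simp
  qed
  have "\<exists>\<sigma>. \<forall>i. w i * exp (-(lam i^2 * B^2/2) * T i) * cosh (lam i * (\<Sum>u<T i. X \<sigma> u i)) \<le> suminf w"
  proof (rule potential[of q B X T lam w])
    show "q > 0" by (rule qpos)
    show "B > 0" by (rule Bpos)
    show "X \<sigma> u i = X \<sigma>' u i" if "\<And>v. v \<le> u \<Longrightarrow> \<sigma> v = \<sigma>' v" for \<sigma> \<sigma>' u i
      unfolding X_def using XQ_loc[OF pq, of u \<sigma> \<sigma>'] YL_loc[OF pq, of u \<sigma> \<sigma>'] that by simp
    show "(\<Sum>s<q. X (\<sigma>(u:=s)) u i) = 0" for \<sigma> u i
      unfolding X_def using XQ_mean[OF pq] YL_mean[OF pq] by (cases "even i") simp_all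
    show "\<bar>X \<sigma> u i\<bar> \<le> B" for \<sigma> u i
      unfolding X_def B_def using XQ_bnd[OF pq] YL_bnd[OF pq] by simp
    show "X \<sigma> u i = 0" if "T i \<le> u" for \<sigma> u i
      unfolding X_def using XQ_van[OF pq] YL_van[OF pq] that by (simp add: T_def)
    show "0 \<le> lam i \<and> lam i \<le> 1" for i by (rule lam01)
    show "0 < w i" for i by (simp add: w_def)
    show "summable w" unfolding w_def by (rule summable_w)
  qed
  then obtain \<sigma> where \<sigma>: "\<And>i. w i * exp (-(lam i^2 * B^2/2) * T i) * cosh (lam i * (\<Sum>u<T i. X \<sigma> u i)) \<le> suminf w"
    by blast
  define W where "W = suminf w"
  have W1: "1 \<le> W"
  proof -
    have "(\<Sum>i\<in>{0}. w i) \<le> suminf w"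
      by (rule sum_le_suminf) (auto simp: w_def summable_w[unfolded w_def[symmetric]] intro: summable_w)
    thus ?thesis by (simp add: W_def w_def)
  qed
  define C where "C = ln (2*W) / ln 2 + 2 + B^2/2"
  have key: "\<bar>\<Sum>u<T i. X \<sigma> u i\<bar> \<le> C * sqrt ((real i + 1) * ln (real i + 2))" for i
  proof -
    define Z where "Z = (\<Sum>u<T i. X \<sigma> u i)"
    define L where "L = ln (real i + 2)"
    have Lpos: "L > 0" using lnpos by (simp add: L_def)
    have lampos: "lam i > 0" using Lpos by (simp add: lam_def L_def)
    have lam2: "(lam i)^2 = L / (real i + 1)" using Lpos by (simp add: lam_def L_def)
    have wpos: "w i > 0" by (simp add: w_def)
    have "lam i * \<bar>Z\<bar> \<le> ln (2 * W / w i) + (lam i^2 * B^2/2) * T i"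
      by (rule pot_bound[OF lampos wpos]) (use \<sigma>[of i] in \<open>simp add: Z_def W_def\<close>)
    also have "ln (2 * W / w i) = ln (2*W) + 2 * ln (real i + 1)"
      using W1 by (simp add: w_def ln_mult ln_realpow)
    also have "ln (2*W) \<le> ln (2*W) / ln 2 * L"
    proof -
      have "ln 2 \<le> L" unfolding L_def by simp
      moreover have "0 \<le> ln (2*W)" using W1 by simp
      ultimately have "ln (2*W) * ln 2 \<le> ln (2*W) * L" by (intro mult_left_mono) auto
      thus ?thesis by (simp add: field_simps)
    qed
    also have "2 * ln (real i + 1) \<le> 2 * L" unfolding L_def by simp
    also have "(lam i^2 * B^2/2) * T i \<le> (B^2/2) * L"
    proof -
      have "T i \<le> real i + 1" by (simp add: T_def)
      hence "L * T i \<le> L * (real i + 1)" using Lpos by (intro mult_left_mono) auto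
      hence "(lam i)^2 * T i \<le> L"
        unfolding lam2 using Lpos by (simp add: field_simps)
      hence "(B^2/2) * ((lam i)^2 * T i) \<le> (B^2/2) * L" by (intro mult_left_mono) auto
      thus ?thesis by (simp add: algebra_simps)
    qed
    finally have "lam i * \<bar>Z\<bar> \<le> C * L" by (simp add: C_def algebra_simps)
    hence "\<bar>Z\<bar> \<le> C * (L / lam i)" using lampos by (simp add: field_simps)
    also have "L / lam i = sqrt ((real i + 1) * L)"
    proof -
      have "lam i = sqrt L / sqrt (real i + 1)" by (simp add: lam_def L_def real_sqrt_divide)
      hence "L / lam i = L * sqrt (real i + 1) / sqrt L" by simp
      also have "\<dots> = sqrt L * sqrt (real i + 1)"
        using Lpos by (simp add: field_simps)
      finally show ?thesis by (simp add: real_sqrt_mult)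
    qed
    finally show ?thesis by (simp add: Z_def L_def mult.assoc)
  qed
  have Cnn: "C \<ge> 0" using W1 by (simp add: C_def)
  show ?thesis
  proof (intro exI allI conjI)
    fix N
    have mono: "C * sqrt ((real i + 1) * ln (real i + 2)) \<le> C * sqrt ((2*real N + 2) * ln (2*real N + 3))"
      if "i \<le> 2*N + 1" for i
    proof -
      have a: "real i + 1 \<le> 2*real N + 2" using that by simp
      have b: "ln (real i + 2) \<le> ln (2*real N + 3)" using that by simp
      have "(real i + 1) * ln (real i + 2) \<le> (2*real N + 2) * ln (2*real N + 3)"
        using a b by (intro mult_mono) auto
      thus ?thesis using Cnn by (intro mult_left_mono) auto
    qed
    have "\<bar>\<Sum>u<N+1. XQ p q \<sigma> u N\<bar> = \<bar>\<Sum>u<T (2*N). X \<sigma> u (2*N)\<bar>" by (simp add: T_def X_def)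
    also have "\<dots> \<le> C * sqrt ((real (2*N) + 1) * ln (real (2*N) + 2))" by (rule key)
    also have "\<dots> \<le> C * sqrt ((2*real N + 2) * ln (2*real N + 3))" by (rule mono) simp
    finally show "\<bar>\<Sum>u<N+1. XQ p q \<sigma> u N\<bar> \<le> C * sqrt ((2*real N + 2) * ln (2*real N + 3))" .
    have "\<bar>\<Sum>u<N+1. YL p q \<sigma> u N\<bar> = \<bar>\<Sum>u<T (2*N+1). X \<sigma> u (2*N+1)\<bar>" by (simp add: T_def X_def)
    also have "\<dots> \<le> C * sqrt ((real (2*N+1) + 1) * ln (real (2*N+1) + 2))" by (rule key)
    also have "\<dots> \<le> C * sqrt ((2*real N + 2) * ln (2*real N + 3))" by (rule mono) simp
    finally show "\<bar>\<Sum>u<N+1. YL p q \<sigma> u N\<bar> \<le> C * sqrt ((2*real N + 2) * ln (2*real N + 3))" .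
  qed
qed

lemma nat_version:
  "\<exists>A :: nat set.
    (\<lambda>N::nat. real (\<Sum>n\<le>N. R A n)
        - (0.5 * (real p ^ 2 / real q ^ 2) * real N ^ 2
           + 1.5 * (real p ^ 2 / real q ^ 2) * real N))
    \<in> O(\<lambda>N. sqrt (real N) * sqrt (ln (real N)))"
proof -
  obtain C \<sigma> where C: "\<And>N. \<bar>\<Sum>u<N+1. XQ p q \<sigma> u N\<bar> \<le> C * sqrt ((2*real N + 2) * ln (2*real N + 3))"
      "\<And>N. \<bar>\<Sum>u<N+1. YL p q \<sigma> u N\<bar> \<le> C * sqrt ((2*real N + 2) * ln (2*real N + 3))"
    using good_sigma by blast
  define a where "a = al p q"
  have a_def': "a = real p / real q" by (simp add: a_def al_def[OF pq])
  have apos: "0 < a" "a < 1" using al_pos[OF pq] al_lt1[OF pq] by (auto simp: a_def)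
  have a2: "real p ^ 2 / real q ^ 2 = a^2" by (simp add: a_def' power_divide)
  define K where "K = a^2 + 2*a*C + C + 5 * real q^2"
  show ?thesis
  proof (intro exI bigoI)
    show "eventually (\<lambda>N. norm (real (\<Sum>n\<le>N. R (Aset p q \<sigma>) n)
        - (0.5 * (real p ^ 2 / real q ^ 2) * real N ^ 2 + 1.5 * (real p ^ 2 / real q ^ 2) * real N))
      \<le> (K * sqrt 8) * norm (sqrt (real N) * sqrt (ln (real N)))) at_top"
      unfolding eventually_at_top_linorder
    proof (intro exI allI impI)
      fix N :: nat assume N3: "3 \<le> N"
      define s where "s = sqrt ((2*real N + 2) * ln (2*real N + 3))"
      have s1: "1 \<le> s"
      proof -
        have "1 \<le> ln (3::real)" using exp_le ln_ge_iff[of 3 1] by simp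
        also have "ln 3 \<le> ln (2*real N + 3)" by simp
        finally have l1: "1 \<le> ln (2*real N + 3)" .
        have "1 * 1 \<le> (2*real N + 2) * ln (2*real N + 3)" using l1 by (intro mult_mono) auto
        thus ?thesis unfolding s_def by simp
      qed
      have Cnn: "0 \<le> C"
      proof -
        have "0 \<le> C * s" using C(1)[of N] unfolding s_def[symmetric] by (rule order_trans[OF abs_ge_zero])
        thus ?thesis using s1 by (simp add: zero_le_mult_iff)
      qed
      have sb: "s \<le> sqrt 8 * (sqrt (real N) * sqrt (ln (real N)))"
      proof -
        have N1: "2*real N + 2 \<le> 4 * real N" using N3 by simp
        have "2*real N + 3 \<le> real N ^ 2"
        proof -
          have "3 * real N \<le> real N * real N" using N3 by (intro mult_right_mono) auto
          moreover have "3 \<le> real N" using N3 by simp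
          ultimately show ?thesis unfolding power2_eq_square by linarith
        qed
        hence "ln (2*real N + 3) \<le> ln (real N ^ 2)" using N3 by (intro ln_mono) auto
        also have "\<dots> = 2 * ln (real N)" using N3 by (simp add: ln_realpow)
        finally have N2: "ln (2*real N + 3) \<le> 2 * ln (real N)" .
        have "0 \<le> ln (2*real N + 3)" by simp
        have "(2*real N + 2) * ln (2*real N + 3) \<le> (4 * real N) * (2 * ln (real N))"
          using N1 N2 by (intro mult_mono) auto
        hence "s \<le> sqrt (8 * (real N * ln (real N)))" unfolding s_def by (simp add: algebra_simps)
        thus ?thesis by (simp add: real_sqrt_mult)
      qed
      have id: "real (\<Sum>n\<le>N. R (Aset p q \<sigma>) n)
          - (0.5 * (real p ^ 2 / real q ^ 2) * real N ^ 2 + 1.5 * (real p ^ 2 / real q ^ 2) * real N)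
          = a^2 + 2 * a * (\<Sum>u<N+1. YL p q \<sigma> u N) + (\<Sum>u<N+1. XQ p q \<sigma> u N) + (\<Sum>u<N+1. RQ p q \<sigma> u N)"
        unfolding main_id[OF pq] a2 a_def[symmetric] by (simp add: algebra_simps power2_eq_square)
      have "\<bar>a^2 + 2 * a * (\<Sum>u<N+1. YL p q \<sigma> u N) + (\<Sum>u<N+1. XQ p q \<sigma> u N) + (\<Sum>u<N+1. RQ p q \<sigma> u N)\<bar>
          \<le> a^2 + 2 * a * (C * s) + C * s + 5 * real q^2"
      proof -
        have y: "\<bar>2 * a * (\<Sum>u<N+1. YL p q \<sigma> u N)\<bar> \<le> 2 * a * (C * s)"
          using C(2)[of N] apos by (simp add: abs_mult s_def)
        have x: "\<bar>\<Sum>u<N+1. XQ p q \<sigma> u N\<bar> \<le> C * s" using C(1)[of N] by (simp add: s_def)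
        have r: "\<bar>\<Sum>u<N+1. RQ p q \<sigma> u N\<bar> \<le> 5 * real q^2" using RQ_sum_bnd[OF pq, of \<sigma> N "N+1"] by simp
        have "\<bar>a^2\<bar> = a^2" by simp
        thus ?thesis using x y r abs4[of "a^2" "2 * a * (\<Sum>u<N+1. YL p q \<sigma> u N)" "\<Sum>u<N+1. XQ p q \<sigma> u N" "\<Sum>u<N+1. RQ p q \<sigma> u N"]
          by linarith
      qed
      also have "\<dots> \<le> K * s"
      proof -
        have "a^2 * 1 \<le> a^2 * s" "5 * real q^2 * 1 \<le> 5 * real q^2 * s" using s1 by (intro mult_left_mono; simp)+
        thus ?thesis by (simp add: K_def algebra_simps)
      qed
      also have "\<dots> \<le> K * (sqrt 8 * (sqrt (real N) * sqrt (ln (real N))))"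
      proof -
        have "0 \<le> K" using Cnn apos by (simp add: K_def)
        thus ?thesis using sb by (intro mult_left_mono) auto
      qed
      finally show "norm (real (\<Sum>n\<le>N. R (Aset p q \<sigma>) n)
        - (0.5 * (real p ^ 2 / real q ^ 2) * real N ^ 2 + 1.5 * (real p ^ 2 / real q ^ 2) * real N))
        \<le> (K * sqrt 8) * norm (sqrt (real N) * sqrt (ln (real N)))"
        unfolding id using N3 by (simp add: abs_mult mult.assoc)
    qed
  qed
qed

end


theorem theorem6:
  fixes p q :: int
  assumes "0 < p" and "p < q"
  shows "\<exists>A :: nat set.
    (\<lambda>N::nat. real (\<Sum>n\<le>N. R A n)
        - (0.5 * (real_of_int p ^ 2 / real_of_int q ^ 2) * real N ^ 2
           + 1.5 * (real_of_int p ^ 2 / real_of_int q ^ 2) * real N))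
    \<in> O(\<lambda>N. sqrt (real N) * sqrt (ln (real N)))"
proof -
  have pq: "0 < nat p" "nat p < nat q" using assms by auto
  have rp: "real_of_int p = real (nat p)" and rq: "real_of_int q = real (nat q)" using assms by auto
  show ?thesis unfolding rp rq by (rule nat_version[OF pq])
qed

end
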